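(* Let $\kappa:[-1,1]\to\mathbb{R}$ be given by $\kappa(t)=\sum_{q\ge 0}\frac{J_q^2}{q!}t^q$, where $J_q\in\mathbb{R}$, $J_q\neq 0$ for infinitely many $q$, $\sum_{q\ge1}\frac{|J_q|}{(q-1)!}<\infty$ (so that $\kappa\in C^1([-1,1])$), and $\kappa(1)=1$. For $L\ge1$ let $\kappa_L=\kappa\circ\cdots\circ\kappa$ ($L$ times), and let $\mathcal{I}(\kappa)=\{t\in[-1,1]:\kappa(t)=1\}$. Assume $\kappa'(1)=1$ and that there exist $c\in\mathbb{R}\setminus\{0\}$ and $\rho>1$ such that \[ 1-\kappa(t)=\kappa'(1)(1-t)-c(1-t)^{\rho}+o\bigl((1-t)^{\rho}\bigr)\quad\text{as } t\to1^-. \] Then $c>0$ and, for every $t\in[-1,1]$, \[ \mathfrak{S}(t):=\lim_{L\to\infty}L^{1/(\rho-1)}\bigl(1-\kappa_L(t)\bigr)=\begin{cases}0,& t\in\mathcal{I}(\kappa),\\ h_{c,\rho},& t\notin\mathcal{I}(\kappa),\end{cases} \] where $h_{c,\rho}=(c(\rho-1))^{-1/(\rho-1)}$. *)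

theory Defs
  imports "HOL-Analysis.Analysis" "HOL-Library.Landau_Symbols"
begin

definition kappa :: "(nat \<Rightarrow> real) \<Rightarrow> real \<Rightarrow> real" where
  "kappa J t = (\<Sum>q. (J q)\<^sup>2 / fact q * t ^ q)"

definition fixset :: "(nat \<Rightarrow> real) \<Rightarrow> real set" where
  "fixset J = {t \<in> {-1..1}. kappa J t = 1}"

end

theory Submission
  imports Defs
begin

lemma gq_nonneg:
  fixes x :: real assumes "-1 \<le> x" "x \<le> 1"
  shows "0 \<le> x^q - q*x + q - 1"
proof (induction q)
  case 0 then show ?case by simp
next
  case (Suc q)
  have "x^q \<le> 1" proof -
    have "\<bar>x\<bar>^q \<le> 1" using assms by (intro power_le_one) auto
    then show ?thesis by (metis abs_ge_self order_trans power_abs)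
  qed
  then have "0 \<le> (1-x)*(1-x^q)" using assms by simp
  moreover have "x^Suc q - Suc q*x + Suc q - 1 = (x^q - q*x + q - 1) + (1-x)*(1-x^q)"
    by (simp add: algebra_simps)
  ultimately show ?case using Suc by linarith
qed

lemma gq_pos:
  fixes x :: real assumes "-1 \<le> x" "x < 1" "2 \<le> q"
  shows "0 < x^q - q*x + q - 1"
  using assms(3)
proof (induction q rule: dec_induct)
  case base
  have "x^2 - 2*x + 2 - 1 = (1-x)^2" by (simp add: power2_eq_square algebra_simps)
  then show ?case using assms by simp
next
  case (step q)
  have "x^q \<le> 1" proof -
    have "\<bar>x\<bar>^q \<le> 1" using assms by (intro power_le_one) auto
    then show ?thesis by (metis abs_ge_self order_trans power_abs)
  qed
  then have "0 \<le> (1-x)*(1-x^q)" using assms by simp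
  moreover have "x^Suc q - Suc q*x + Suc q - 1 = (x^q - q*x + q - 1) + (1-x)*(1-x^q)"
    by (simp add: algebra_simps)
  ultimately show ?case using step by linarith
qed


lemma kappa_summable:
  fixes J :: "nat \<Rightarrow> real" and x :: real
  assumes k1: "(\<lambda>q. (J q)\<^sup>2 / fact q) sums 1" and x: "\<bar>x\<bar> \<le> 1"
  shows "summable (\<lambda>q. (J q)\<^sup>2 / fact q * x ^ q)"
proof (rule summable_comparison_test[OF _ sums_summable[OF k1]])
  show "\<exists>N. \<forall>n\<ge>N. norm ((J n)\<^sup>2 / fact n * x ^ n) \<le> (J n)\<^sup>2 / fact n"
  proof (intro exI allI impI)
    fix n
    have "\<bar>x\<bar>^n \<le> 1" using x by (intro power_le_one) auto
    then have "(J n)\<^sup>2 / fact n * \<bar>x\<bar>^n \<le> (J n)\<^sup>2 / fact n * 1"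
      by (intro mult_left_mono) auto
    then show "norm ((J n)\<^sup>2 / fact n * x ^ n) \<le> (J n)\<^sup>2 / fact n"
      by (simp add: abs_mult power_abs)
  qed
qed

lemma kappa_sums:
  fixes J :: "nat \<Rightarrow> real" and x :: real
  assumes k1: "(\<lambda>q. (J q)\<^sup>2 / fact q) sums 1" and x: "\<bar>x\<bar> \<le> 1"
  shows "(\<lambda>q. (J q)\<^sup>2 / fact q * x ^ q) sums kappa J x"
  unfolding kappa_def using kappa_summable[OF k1 x] by (simp add: summable_sums)

lemma kappa_at1:
  fixes J :: "nat \<Rightarrow> real"
  assumes k1: "(\<lambda>q. (J q)\<^sup>2 / fact q) sums 1"
  shows "kappa J 1 = 1"
  unfolding kappa_def using k1 by (simp add: sums_iff)

lemma kappa_isCont: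
  fixes J :: "nat \<Rightarrow> real" and x :: real
  assumes k1: "(\<lambda>q. (J q)\<^sup>2 / fact q) sums 1" and x: "\<bar>x\<bar> < 1"
  shows "isCont (kappa J) x"
proof -
  have "isCont (\<lambda>x. \<Sum>q. (J q)\<^sup>2 / fact q * x ^ q) x"
    by (rule isCont_powser[where K=1]) (use kappa_summable[OF k1, of 1] x in auto)
  then show ?thesis unfolding kappa_def[abs_def] .
qed

lemma kappa_lt1:
  fixes J :: "nat \<Rightarrow> real" and x :: real
  assumes k1: "(\<lambda>q. (J q)\<^sup>2 / fact q) sums 1" and x: "\<bar>x\<bar> < 1"
    and q0: "q0 \<ge> 1" "J q0 \<noteq> 0"
  shows "kappa J x < 1"
proof -
  have s: "(\<lambda>q. (J q)\<^sup>2 / fact q - (J q)\<^sup>2 / fact q * x ^ q) sums (1 - kappa J x)"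
    by (intro sums_diff k1 kappa_sums) (use x in auto)
  have nn: "0 \<le> (J q)\<^sup>2 / fact q - (J q)\<^sup>2 / fact q * x ^ q" for q
  proof -
    have "\<bar>x\<bar>^q \<le> 1" using x by (intro power_le_one) auto
    then have "x^q \<le> 1" by (metis abs_ge_self order_trans power_abs)
    then have "(J q)\<^sup>2 / fact q * x^q \<le> (J q)\<^sup>2 / fact q * 1"
      by (intro mult_left_mono) auto
    then show ?thesis by simp
  qed
  have "\<bar>x\<bar>^q0 < 1" using x q0 by (simp add: power_less_one_iff)
  then have "x^q0 < 1" by (metis abs_ge_self le_less_trans power_abs)
  moreover have "0 < (J q0)\<^sup>2 / fact q0" using q0 by simp
  ultimately have "(J q0)\<^sup>2 / fact q0 * x ^ q0 < (J q0)\<^sup>2 / fact q0 * 1"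
    by (intro mult_strict_left_mono) auto
  then have "0 < (J q0)\<^sup>2 / fact q0 - (J q0)\<^sup>2 / fact q0 * x ^ q0"
    by simp
  then have "0 < 1 - kappa J x"
    using suminf_pos2[OF sums_summable[OF s] nn] s by (simp add: sums_iff)
  then show ?thesis by simp
qed


lemma kappa_Sq:
  fixes J :: "nat \<Rightarrow> real"
  assumes k1: "(\<lambda>q. (J q)\<^sup>2 / fact q) sums 1"
    and d1: "(kappa J has_real_derivative 1) (at 1 within {-1..1})"
  shows "summable (\<lambda>q. real q * ((J q)\<^sup>2 / fact q)) \<and> (\<Sum>q. real q * ((J q)\<^sup>2 / fact q)) \<le> 1"
proof -
  define a where "a q = (J q)\<^sup>2 / fact q" for q
  have a0: "0 \<le> a q" for q unfolding a_def by simp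
  have part: "(\<Sum>q<n. real q * a q) \<le> 1" for n
  proof -
    define P where "P t = (\<Sum>q<n. a q * (\<Sum>i<q. t^i))" for t :: real
    have "((\<lambda>y. (kappa J y - kappa J 1) / (y - 1)) \<longlongrightarrow> 1) (at 1 within {0..1})"
      using has_field_derivative_subset[OF d1, of "{0..1}"] by (simp add: has_field_derivative_iff)
    then have L1: "((\<lambda>y. (kappa J y - kappa J 1) / (y - 1)) \<longlongrightarrow> 1) (at_left 1)"
      by (simp add: at_within_Icc_at_left)
    have "(P \<longlongrightarrow> P 1) (at_left 1)" unfolding P_def by (intro tendsto_intros)
    moreover have "P 1 = (\<Sum>q<n. real q * a q)" unfolding P_def by (simp add: mult.commute)
    ultimately have L2: "(P \<longlongrightarrow> (\<Sum>q<n. real q * a q)) (at_left 1)" by simp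
    have ev: "eventually (\<lambda>y. P y \<le> (kappa J y - kappa J 1) / (y - 1)) (at_left 1)"
      using eventually_at_left_real[of 0 "1::real", OF zero_less_one]
    proof (rule eventually_mono)
      fix t :: real assume t: "t \<in> {0<..<1}"
      have s: "(\<lambda>q. a q - a q * t ^ q) sums (1 - kappa J t)"
        unfolding a_def by (intro sums_diff k1 kappa_sums) (use t in auto)
      have nn: "0 \<le> a q - a q * t ^ q" for q
      proof -
        have "t^q \<le> 1" using t by (intro power_le_one) auto
        then have "a q * t^q \<le> a q * 1" using a0 by (intro mult_left_mono) auto
        then show ?thesis by simp
      qed
      have "(\<Sum>q<n. a q - a q * t ^ q) \<le> 1 - kappa J t"
        using sum_le_suminf[OF sums_summable[OF s], of "{..<n}"] nn s by (simp add: sums_iff)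
      moreover have "(\<Sum>q<n. a q - a q * t ^ q) = (1 - t) * P t"
        unfolding P_def sum_distrib_left[of "1-t"]
      proof (intro sum.cong refl)
        fix q
        have "(1 - t) * (a q * (\<Sum>i<q. t ^ i)) = a q * ((1 - t) * (\<Sum>i<q. t ^ i))" by simp
        also have "\<dots> = a q * (1 - t ^ q)" by (simp only: one_diff_power_eq)
        finally show "a q - a q * t ^ q = (1 - t) * (a q * (\<Sum>i<q. t ^ i))"
          by (simp add: algebra_simps)
      qed
      ultimately have "(1 - t) * P t \<le> 1 - kappa J t" by simp
      then have "P t \<le> (1 - kappa J t) / (1 - t)" using t by (simp add: field_simps)
      also have "\<dots> = (kappa J t - kappa J 1) / (t - 1)"
        using kappa_at1[OF k1] t by (simp add: field_simps)
      finally show "P t \<le> (kappa J t - kappa J 1) / (t - 1)" .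
    qed
    show ?thesis by (rule tendsto_le[OF _ L1 L2 ev]) simp
  qed
  have sm: "summable (\<lambda>q. real q * a q)"
  proof (rule bounded_imp_summable[where B=1])
    show "0 \<le> real n * a n" for n using a0 by simp
    show "(\<Sum>k\<le>n. real k * a k) \<le> 1" for n using part[of "Suc n"]
      by (simp only: lessThan_Suc_atMost)
  qed
  moreover have "(\<Sum>q. real q * a q) \<le> 1" by (rule suminf_le_const[OF sm part])
  ultimately show ?thesis unfolding a_def by simp
qed

lemma kappa_gt:
  fixes J :: "nat \<Rightarrow> real" and x :: real
  assumes k1: "(\<lambda>q. (J q)\<^sup>2 / fact q) sums 1"
    and d1: "(kappa J has_real_derivative 1) (at 1 within {-1..1})"
    and q0: "q0 \<ge> 2" "J q0 \<noteq> 0"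
    and x: "-1 \<le> x" "x < 1"
  shows "x < kappa J x"
proof -
  define a where "a q = (J q)\<^sup>2 / fact q" for q
  have a0: "0 \<le> a q" for q unfolding a_def by simp
  define S where "S = (\<Sum>q. real q * a q)"
  have S: "(\<lambda>q. real q * a q) sums S" "S \<le> 1"
    using kappa_Sq[OF k1 d1] unfolding S_def a_def by (auto simp: summable_sums)
  have ax: "(\<lambda>q. a q * x ^ q) sums kappa J x"
    unfolding a_def by (rule kappa_sums[OF k1]) (use x in auto)
  have a1: "a sums 1" using k1 unfolding a_def[abs_def] .
  have "(\<lambda>q. a q * x ^ q - x * (real q * a q) + real q * a q - a q) sums (kappa J x - x * S + S - 1)"
    by (intro sums_diff sums_add sums_mult ax S a1)
  moreover have "(\<lambda>q. a q * x ^ q - x * (real q * a q) + real q * a q - a q)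
      = (\<lambda>q. a q * (x ^ q - real q * x + real q - 1))"
    by (simp add: fun_eq_iff algebra_simps)
  ultimately have s: "(\<lambda>q. a q * (x ^ q - real q * x + real q - 1)) sums (kappa J x - x * S + S - 1)"
    by simp
  have "0 < kappa J x - x * S + S - 1"
  proof -
    have "0 < suminf (\<lambda>q. a q * (x ^ q - real q * x + real q - 1))"
    proof (rule suminf_pos2[OF sums_summable[OF s]])
      show "0 \<le> a q * (x ^ q - real q * x + real q - 1)" for q
        using a0 gq_nonneg[of x q] x by simp
      show "0 < a q0 * (x ^ q0 - real q0 * x + real q0 - 1)"
        using gq_pos[of x q0] x q0 by (simp add: a_def)
    qed
    then show ?thesis using s by (simp add: sums_iff)
  qed
  moreover have "0 \<le> (1 - S) * (1 - x)" using S x by simp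
  ultimately show ?thesis by (simp add: algebra_simps)
qed


lemma cesaro0:
  fixes e :: "nat \<Rightarrow> real"
  assumes "e \<longlonglongrightarrow> 0"
  shows "(\<lambda>n. (\<Sum>k<n. e k) / real n) \<longlonglongrightarrow> 0"
proof (rule LIMSEQ_I)
  fix r :: real assume r: "0 < r"
  obtain N where N: "\<And>k. k \<ge> N \<Longrightarrow> norm (e k) < r / 2"
    using LIMSEQ_D[OF assms, of "r/2"] r by auto
  define M where "M = (\<Sum>k<N. \<bar>e k\<bar>)"
  have M0: "0 \<le> M" unfolding M_def by (simp add: sum_nonneg)
  obtain N2 :: nat where N2: "real N2 > 2 * M / r" using reals_Archimedean2 by blast
  show "\<exists>no. \<forall>n\<ge>no. norm ((\<Sum>k<n. e k) / real n - 0) < r"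
  proof (intro exI allI impI)
    fix n assume n: "n \<ge> max (Suc N) N2"
    then have nN: "N \<le> n" and npos: "real n > 0" by auto
    have split: "(\<Sum>k<n. e k) = (\<Sum>k<N. e k) + (\<Sum>k=N..<n. e k)"
      using nN by (metis atLeast0LessThan sum.atLeastLessThan_concat zero_le)
    have b1: "\<bar>\<Sum>k<N. e k\<bar> \<le> M" unfolding M_def by (rule sum_abs)
    have "\<bar>\<Sum>k=N..<n. e k\<bar> \<le> (\<Sum>k=N..<n. \<bar>e k\<bar>)" by (rule sum_abs)
    also have "\<dots> \<le> (\<Sum>k=N..<n. r / 2)"
      by (intro sum_mono) (use N in \<open>auto simp: less_imp_le\<close>)
    also have "\<dots> = real (n - N) * (r / 2)" by simp
    also have "\<dots> \<le> real n * (r / 2)" using r by (intro mult_right_mono) auto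
    finally have b2: "\<bar>\<Sum>k=N..<n. e k\<bar> \<le> real n * (r / 2)" .
    have "\<bar>\<Sum>k<n. e k\<bar> \<le> M + real n * (r / 2)" using split b1 b2 by linarith
    moreover have "M < real n * (r / 2)"
    proof -
      have "real N2 \<le> real n" using n by auto
      then have "2 * M / r < real n" using N2 by linarith
      then show ?thesis using r by (simp add: field_simps)
    qed
    ultimately have "\<bar>\<Sum>k<n. e k\<bar> < real n * r" by linarith
    then show "norm ((\<Sum>k<n. e k) / real n - 0) < r"
      using npos by (simp add: field_simps)
  qed
qed

lemma cesaro:
  fixes d :: "nat \<Rightarrow> real"
  assumes "d \<longlonglongrightarrow> D"
  shows "(\<lambda>n. (\<Sum>k<n. d k) / real n) \<longlonglongrightarrow> D"
proof -
  have "(\<lambda>n. d n - D) \<longlonglongrightarrow> 0" using tendsto_diff[OF assms tendsto_const[of D]] by simp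
  from cesaro0[OF this] have "(\<lambda>n. (\<Sum>k<n. d k - D) / real n + D) \<longlonglongrightarrow> 0 + D"
    by (intro tendsto_add) auto
  moreover have "eventually (\<lambda>n. (\<Sum>k<n. d k - D) / real n + D = (\<Sum>k<n. d k) / real n) sequentially"
    using eventually_gt_at_top[of 0]
    by eventually_elim (simp add: sum_subtractf field_simps)
  ultimately show ?thesis by (simp add: tendsto_cong)
qed

lemma powr_quot_lim:
  fixes p :: real
  shows "((\<lambda>z. ((1 - z) powr (-p) - 1) / z) \<longlongrightarrow> p) (at 0)"
proof -
  have "DERIV (\<lambda>z. (1 - z) powr (-p)) 0 :> (-p) * (1 - 0) powr (-p - of_nat 1) * (-1)"
    by (rule DERIV_fun_powr) (auto intro!: derivative_eq_intros)
  then have "DERIV (\<lambda>z. (1 - z) powr (-p)) 0 :> p" by simp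
  then show ?thesis by (simp add: has_field_derivative_iff)
qed


lemma kappa_le1:
  fixes J :: "nat \<Rightarrow> real" and x :: real
  assumes k1: "(\<lambda>q. (J q)\<^sup>2 / fact q) sums 1" and x: "\<bar>x\<bar> \<le> 1"
  shows "kappa J x \<le> 1"
proof -
  have s: "(\<lambda>q. (J q)\<^sup>2 / fact q - (J q)\<^sup>2 / fact q * x ^ q) sums (1 - kappa J x)"
    by (intro sums_diff k1 kappa_sums) (use x in auto)
  have nn: "0 \<le> (J q)\<^sup>2 / fact q - (J q)\<^sup>2 / fact q * x ^ q" for q
  proof -
    have "\<bar>x\<bar>^q \<le> 1" using x by (intro power_le_one) auto
    then have "x^q \<le> 1" by (metis abs_ge_self order_trans power_abs)
    then have "(J q)\<^sup>2 / fact q * x^q \<le> (J q)\<^sup>2 / fact q * 1"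
      by (intro mult_left_mono) auto
    then show ?thesis by simp
  qed
  have "0 \<le> 1 - kappa J x"
    using suminf_nonneg[OF sums_summable[OF s] nn] s by (simp add: sums_iff)
  then show ?thesis by simp
qed

lemma main_nonfix:
  fixes J :: "nat \<Rightarrow> real" and c \<rho> t :: real
  assumes k1: "(\<lambda>q. (J q)\<^sup>2 / fact q) sums 1"
    and d1: "(kappa J has_real_derivative 1) (at 1 within {-1..1})"
    and q0: "q0 \<ge> 2" "J q0 \<noteq> 0"
    and c_nz: "c \<noteq> 0" and rho: "\<rho> > 1"
    and expansion: "(\<lambda>t. 1 - kappa J t - (1 - t) + c * (1 - t) powr \<rho>)
                      \<in> o[at_left 1](\<lambda>t. (1 - t) powr \<rho>)"
    and t: "t \<in> {-1..1}" "t \<notin> fixset J"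
  shows "c > 0 \<and> (\<lambda>L. real L powr (1 / (\<rho> - 1)) * (1 - (kappa J ^^ L) t))
        \<longlonglongrightarrow> (c * (\<rho> - 1)) powr (- 1 / (\<rho> - 1))"
proof -
  define u where "u L = (kappa J ^^ L) t" for L
  have uSuc: "u (Suc L) = kappa J (u L)" for L by (simp add: u_def)
  have u0: "u 0 = t" by (simp add: u_def)
  have kt: "kappa J t \<noteq> 1" using t unfolding fixset_def by auto
  have t1: "t < 1" using t kt kappa_at1[OF k1] by (cases "t = 1") auto
  have gt: "\<And>s. -1 \<le> s \<Longrightarrow> s < 1 \<Longrightarrow> s < kappa J s"
    using kappa_gt[OF k1 d1 q0] by blast
  have lt1: "\<And>s. \<bar>s\<bar> < 1 \<Longrightarrow> kappa J s < 1"
    using kappa_lt1[OF k1 _ _ q0(2)] q0(1) by auto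
  have ubd: "-1 < u (Suc L) \<and> u (Suc L) < 1" for L
  proof (induction L)
    case 0
    have "t < kappa J t" using gt t t1 by auto
    moreover have "kappa J t \<le> 1" using kappa_le1[OF k1] t by auto
    ultimately show ?case using t kt uSuc[of 0] u0 by auto
  next
    case (Suc L)
    then show ?case using gt[of "u (Suc L)"] lt1[of "u (Suc L)"] uSuc[of "Suc L"] by auto
  qed
  have ult: "-1 \<le> u L \<and> u L < 1" for L
    using ubd[of "L - 1"] t t1 u0 by (cases L) auto
  have uinc: "u L < u (Suc L)" for L using gt ult[of L] uSuc[of L] by auto
  have ulim: "u \<longlonglongrightarrow> 1"
  proof -
    have inc: "incseq u" by (rule incseq_SucI) (use uinc less_imp_le in auto)
    have "bdd_above (range u)" using ult by (auto intro!: bdd_aboveI[of _ 1] less_imp_le)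
    from LIMSEQ_incseq_SUP[OF this inc] obtain l where l: "u \<longlonglongrightarrow> l" by blast
    have l1: "l \<le> 1" by (rule LIMSEQ_le_const2[OF l]) (use ult less_imp_le in auto)
    have lm: "u 1 \<le> l" by (rule LIMSEQ_le_const[OF l]) (use inc in \<open>auto simp: incseq_def\<close>)
    have "l = 1"
    proof (rule ccontr)
      assume "l \<noteq> 1"
      then have l1': "l < 1" using l1 by simp
      have lm1: "-1 < l" using lm ubd[of 0] by simp
      have "isCont (kappa J) l" by (rule kappa_isCont[OF k1]) (use l1' lm1 in auto)
      then have "(\<lambda>L. kappa J (u L)) \<longlonglongrightarrow> kappa J l" by (rule isCont_tendsto_compose[OF _ l])
      moreover have "(\<lambda>L. kappa J (u L)) \<longlonglongrightarrow> l"
        using LIMSEQ_Suc[OF l] by (simp add: uSuc)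
      ultimately have "kappa J l = l" using LIMSEQ_unique by blast
      then show False using gt[of l] l1' lm1 by simp
    qed
    then show ?thesis using l by simp
  qed
  define x where "x L = 1 - u L" for L
  have xpos: "x L > 0" for L using ult[of L] by (simp add: x_def)
  have xSuc: "x (Suc L) = 1 - kappa J (u L)" for L by (simp add: x_def uSuc)
  have xdec: "x (Suc L) < x L" for L using uinc[of L] by (simp add: x_def)
  have xlim: "x \<longlonglongrightarrow> 0" unfolding x_def using tendsto_diff[OF tendsto_const[of 1] ulim] by simp
  define g where "g s = 1 - kappa J s - (1 - s) + c * (1 - s) powr \<rho>" for s
  have glim: "((\<lambda>s. g s / (1 - s) powr \<rho>) \<longlongrightarrow> 0) (at_left 1)"
    using smalloD_tendsto[OF expansion] unfolding g_def .
  have ufl: "filterlim u (at_left 1) sequentially"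
    by (rule tendsto_imp_filterlim_at_left[OF ulim]) (use ult in auto)
  define \<eta> where "\<eta> L = g (u L) / (x L) powr \<rho>" for L
  have etalim: "\<eta> \<longlonglongrightarrow> 0"
    using filterlim_compose[OF glim ufl] unfolding \<eta>_def x_def by simp
  define w where "w L = c - \<eta> L" for L
  have wlim: "w \<longlonglongrightarrow> c" unfolding w_def using tendsto_diff[OF tendsto_const[of c] etalim] by simp
  have xrec: "x (Suc L) = x L - (x L) powr \<rho> * w L" for L
  proof -
    have "(x L) powr \<rho> > 0" using xpos[of L] by simp
    then have "\<eta> L * (x L) powr \<rho> = g (u L)" unfolding \<eta>_def by simp
    then show ?thesis unfolding w_def g_def using xSuc[of L]
      by (simp add: x_def algebra_simps)
  qed
  have wpos: "w L > 0" for L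
  proof -
    have "(x L) powr \<rho> * w L > 0" using xrec[of L] xdec[of L] by simp
    moreover have "(x L) powr \<rho> > 0" using xpos[of L] by simp
    ultimately show ?thesis by (simp add: zero_less_mult_iff)
  qed
  have "c \<ge> 0" by (rule LIMSEQ_le_const[OF wlim]) (use wpos less_imp_le in auto)
  then have cpos: "c > 0" using c_nz by simp
  define p where "p = \<rho> - 1"
  have ppos: "p > 0" using rho by (simp add: p_def)
  define z where "z L = (x L) powr p * w L" for L
  have xrho: "(x L) powr \<rho> = x L * (x L) powr p" for L
    using powr_add[of "x L" 1 "\<rho> - 1"] xpos[of L] by (simp add: p_def)
  have xz: "x (Suc L) = x L * (1 - z L)" for L
    using xrec[of L] by (simp add: z_def xrho algebra_simps)
  have zpos: "z L > 0" for L using xpos[of L] wpos[of L] by (simp add: z_def)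
  have z1: "1 - z L > 0" for L
    using xz[of L] xpos[of L] xpos[of "Suc L"] by (simp add: zero_less_mult_iff)
  have zlim: "z \<longlonglongrightarrow> 0"
  proof -
    have "(\<lambda>L. (x L) powr p) \<longlonglongrightarrow> 0 powr p"
      by (rule tendsto_powr'[OF xlim tendsto_const]) (use ppos xpos less_imp_le in \<open>auto intro!: always_eventually\<close>)
    then have "z \<longlonglongrightarrow> 0 * c" unfolding z_def using ppos by (intro tendsto_mult wlim) auto
    then show ?thesis by simp
  qed
  define y where "y L = (x L) powr (-p)" for L
  define h where "h s = ((1 - s) powr (-p) - 1) / s" for s :: real
  have dform: "y (Suc L) - y L = w L * h (z L)" for L
  proof -
    have "y (Suc L) = y L * (1 - z L) powr (-p)"
      unfolding y_def xz using xpos[of L] z1[of L] by (simp add: powr_mult)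
    moreover have "w L * h (z L) = y L * ((1 - z L) powr (-p) - 1)"
      unfolding h_def z_def y_def using xpos[of L] wpos[of L]
      by (simp add: powr_minus_divide field_simps)
    ultimately show ?thesis by (simp add: algebra_simps)
  qed
  have dlim: "(\<lambda>L. y (Suc L) - y L) \<longlonglongrightarrow> c * p"
  proof -
    have zat: "filterlim z (at 0) sequentially"
      by (rule filterlim_atI[OF zlim]) (use zpos in \<open>auto intro!: always_eventually simp: less_imp_neq[symmetric]\<close>)
    have "(\<lambda>L. h (z L)) \<longlonglongrightarrow> p"
      using filterlim_compose[OF powr_quot_lim[of p] zat] unfolding h_def .
    then show ?thesis unfolding dform by (intro tendsto_mult wlim)
  qed
  have ylim: "(\<lambda>n. y n / real n) \<longlonglongrightarrow> c * p"
  proof -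
    have "(\<lambda>n. (\<Sum>k<n. y (Suc k) - y k) / real n + y 0 / real n) \<longlonglongrightarrow> c * p + 0"
      by (intro tendsto_add cesaro[OF dlim] tendsto_divide_0[OF tendsto_const] filterlim_at_top_imp_at_infinity[OF filterlim_real_sequentially])
    then show ?thesis by (simp add: sum_lessThan_telescope add_divide_distrib[symmetric])
  qed
  have fin: "(\<lambda>n. (y n / real n) powr (-1/p)) \<longlonglongrightarrow> (c * p) powr (-1/p)"
    by (rule tendsto_powr[OF ylim tendsto_const]) (use cpos ppos in auto)
  have eq: "(y n / real n) powr (-1/p) = real n powr (1 / p) * (1 - (kappa J ^^ n) t)" if "n > 0" for n
  proof -
    have "y n powr (-1/p) = x n"
      unfolding y_def using xpos[of n] ppos by (simp add: powr_powr)
    moreover have "(y n / real n) powr (-1/p) = y n powr (-1/p) / real n powr (-1/p)"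
      using xpos[of n] by (simp add: powr_divide y_def)
    moreover have "real n powr (-1/p) = 1 / real n powr (1/p)"
      by (simp add: powr_minus_divide[symmetric])
    ultimately show ?thesis by (simp add: x_def u_def)
  qed
  have "(\<lambda>n. real n powr (1 / p) * (1 - (kappa J ^^ n) t)) \<longlonglongrightarrow> (c * p) powr (-1/p)"
    by (rule Lim_transform_eventually[OF fin]) (use eventually_mono[OF eventually_gt_at_top[of 0] eq] in simp)
  then show ?thesis using cpos by (simp add: p_def)
qed


theorem lemma3p7:
  fixes J :: "nat \<Rightarrow> real" and c \<rho> :: real
  assumes inf_nonzero: "infinite {q. J q \<noteq> 0}"
    and summ: "summable (\<lambda>q. \<bar>J (Suc q)\<bar> / fact q)"
    and kappa_one: "(\<lambda>q. (J q)\<^sup>2 / fact q) sums 1"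
    and deriv_one: "(kappa J has_real_derivative 1) (at 1 within {-1..1})"
    and c_nz: "c \<noteq> 0" and rho: "\<rho> > 1"
    and expansion: "(\<lambda>t. 1 - kappa J t - (1 - t) + c * (1 - t) powr \<rho>)
                      \<in> o[at_left 1](\<lambda>t. (1 - t) powr \<rho>)"
  shows "c > 0 \<and>
    (\<forall>t \<in> {-1..1}.
      (\<lambda>L. real L powr (1 / (\<rho> - 1)) * (1 - (kappa J ^^ L) t))
        \<longlonglongrightarrow> (if t \<in> fixset J then 0 else (c * (\<rho> - 1)) powr (- 1 / (\<rho> - 1))))"
proof -
  obtain q0 where q0: "q0 \<ge> 2" "J q0 \<noteq> 0"
    using inf_nonzero unfolding infinite_nat_iff_unbounded_le by blast
  note M = main_nonfix[OF kappa_one deriv_one q0 c_nz rho expansion]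
  have "kappa J 0 < 1" using kappa_lt1[OF kappa_one, of 0 q0] q0 by simp
  then have "0 \<notin> fixset J" unfolding fixset_def by auto
  then have cpos: "c > 0" using M[of 0] by auto
  have lim: "(\<lambda>L. real L powr (1 / (\<rho> - 1)) * (1 - (kappa J ^^ L) t))
        \<longlonglongrightarrow> (if t \<in> fixset J then 0 else (c * (\<rho> - 1)) powr (- 1 / (\<rho> - 1)))"
    if t: "t \<in> {-1..1}" for t
  proof (cases "t \<in> fixset J")
    case False
    then show ?thesis using M[of t] t by simp
  next
    case True
    then have kt: "kappa J t = 1" unfolding fixset_def by auto
    have one: "(kappa J ^^ L) 1 = 1" for L
      by (induction L) (auto simp: kappa_at1[OF kappa_one])
    have s1: "(kappa J ^^ Suc L) t = 1" for L
      using one[of L] kt by (simp add: funpow_Suc_right del: funpow.simps)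
    have e: "0 = real L powr (1 / (\<rho> - 1)) * (1 - (kappa J ^^ L) t)" if "L > 0" for L
      using s1[of "L - 1"] that by simp
    have "eventually (\<lambda>L. 0 = real L powr (1 / (\<rho> - 1)) * (1 - (kappa J ^^ L) t)) sequentially"
      by (rule eventually_mono[OF eventually_gt_at_top[of 0] e])
    then have "(\<lambda>L. real L powr (1 / (\<rho> - 1)) * (1 - (kappa J ^^ L) t)) \<longlonglongrightarrow> 0"
      by (rule Lim_transform_eventually[OF tendsto_const])
    then show ?thesis using True by simp
  qed
  show ?thesis using cpos lim by blast
qed

end
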